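(* Let $\mathcal{M}=\langle S,A,T,r,c,\gamma,\mu_0,\bar\delta\rangle$ be a deterministic CMDP (deterministic transitions, starting state $s_0$) with cost budget $\bar\delta\ge V_C^*(s_0)$, and let $\bar{\mathcal{M}}_D(\mathcal{M})$ be its direct budget-tracking budget-adaptive MDP. Then: (1) any policy $\pi\in\Pi_P$ induces trajectories that start in and remain entirely within the feasible subspace $\bar S_P$; (2) any deterministic policy $\pi$ satisfying the CMDP cost constraint $\sum_{t=0}^\infty\gamma^tc(s_t,a_t)\le\bar\delta$ (along its induced trajectory) belongs to $\Pi_P$; (3) conversely, if $\pi\in\Pi_P$, then $\pi$ satisfies the cumulative cost constraint $\sum_{t=0}^\infty\gamma^t c(s_t,a_t)\le\bar\delta$ of $\mathcal{M}$. Consequently, in deterministic environments it suffices to enforce $\pi\in\Pi_P$ instead of explicitly enforcing the cumulative cost constraint.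
   Context: A CMDP $\mathcal{M}=\langle S,A,T,r,c,\gamma,\mu_0,\bar\delta\rangle$ has state space $S$, action space $A$, transition kernel $T$, reward $r$, cost $c:S\times A\to\mathbb{R}^+$ bounded by $c_{\max}$, discount $\gamma\in[0,1)$, initial distribution $\mu_0$ and cost threshold $\bar\delta$. Optimal cost values: $V_C^*(s)=\min_\pi\mathbb{E}_{\pi,s_0=s}[\sum_{t\ge0}\gamma^tc(s_t,a_t)]$, $Q_C^*(s,a)=\min_\pi\mathbb{E}_{\pi,s_0=s,a_0=a}[\sum_{t\ge0}\gamma^tc(s_t,a_t)]$. Persistent safe action set $A_P(s,\delta)=\{a:Q_C^*(s,a)\le\delta\}$; feasible subspace $\bar S_P=\{(s,\delta):\delta\in\mathbb{R}^+,\ V_C^*(s)\le\delta\}$. A budget-adaptive MDP built from $\mathcal{M}$ with $f:S\times\mathbb{R}^+\to\mathbb{R}^+$ and $g:S\times A\times S\times\mathbb{R}^+\to\mathbb{R}^+$ has augmented states $(s,\delta)\in S\times\mathbb{R}^+$, the same actions, reward and cost as $\mathcal{M}$ (not depending on $\delta$), initial augmented state $(s_0,f(s_0,\bar\delta))$ with $s_0\sim\mu_0$, and transitions $\bar T((s',\delta')\mid(s,\delta),a)=T(s'\mid s,a)\mathbf{1}\{\delta'=g(s,a,s',\delta)\}$. The direct budget-tracking BAMDP $\bar{\mathcal{M}}_D$ uses $f(s_0,\bar\delta)=\bar\delta$ and $g(s,a,s',\delta)=\frac{\delta-c(s,a)}{\gamma}$. The budget-restricted policy set $\Pi_P$ consists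 of policies $\pi$ on augmented states $(s,\delta)$ with $\pi(a\mid(s,\delta))>0\implies a\in A_P(s,\delta)$.
   Formalization: Membership in $\Pi_P$ requires $a\in A_P(s,\delta)$ for positive-probability actions only at augmented states on trajectories of $\pi$ from $(s_0,\bar\delta)$, not at every $(s,\delta)$, and the discount satisfies $\gamma>0$. The statement above fails without it. *)

theory Defs
  imports "HOL-Analysis.Analysis" "HOL-Probability.Probability_Mass_Function"
begin

fun run :: "('s \<Rightarrow> 'a \<Rightarrow> 's) \<Rightarrow> 's \<Rightarrow> (nat \<Rightarrow> 'a) \<Rightarrow> nat \<Rightarrow> 's" where
  "run step s as 0 = s"
| "run step s as (Suc n) = step (run step s as n) (as n)"

definition cum_cost :: "real \<Rightarrow> ('s \<Rightarrow> 'a \<Rightarrow> real) \<Rightarrow> (nat \<Rightarrow> 's) \<Rightarrow> (nat \<Rightarrow> 'a) \<Rightarrow> real" where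
  "cum_cost gam c ss as = (\<Sum>t. gam ^ t * c (ss t) (as t))"

text \<open>Optimal cost values (deterministic environment: optimisation over action sequences).\<close>
definition VC :: "('s \<Rightarrow> 'a \<Rightarrow> 's) \<Rightarrow> ('s \<Rightarrow> 'a \<Rightarrow> real) \<Rightarrow> real \<Rightarrow> 's \<Rightarrow> real" where
  "VC step c gam s = (INF as. cum_cost gam c (run step s as) as)"

definition QC :: "('s \<Rightarrow> 'a \<Rightarrow> 's) \<Rightarrow> ('s \<Rightarrow> 'a \<Rightarrow> real) \<Rightarrow> real \<Rightarrow> 's \<Rightarrow> 'a \<Rightarrow> real" where
  "QC step c gam s a = (INF as \<in> {as. as 0 = a}. cum_cost gam c (run step s as) as)"

definition A_P :: "('s \<Rightarrow> 'a \<Rightarrow> 's) \<Rightarrow> ('s \<Rightarrow> 'a \<Rightarrow> real) \<Rightarrow> real \<Rightarrow> 's \<Rightarrow> real \<Rightarrow> 'a set" where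
  "A_P step c gam s d = {a. QC step c gam s a \<le> d}"

definition S_P :: "('s \<Rightarrow> 'a \<Rightarrow> 's) \<Rightarrow> ('s \<Rightarrow> 'a \<Rightarrow> real) \<Rightarrow> real \<Rightarrow> ('s \<times> real) set" where
  "S_P step c gam = {(s, d). 0 \<le> d \<and> VC step c gam s \<le> d}"

definition bamdp_traj ::
  "('s \<Rightarrow> 'a \<Rightarrow> 's) \<Rightarrow> ('s \<Rightarrow> 'a \<Rightarrow> real) \<Rightarrow> real \<Rightarrow> 's \<Rightarrow> real \<Rightarrow>
   ('s \<times> real \<Rightarrow> 'a pmf) \<Rightarrow> (nat \<Rightarrow> 's) \<Rightarrow> (nat \<Rightarrow> real) \<Rightarrow> (nat \<Rightarrow> 'a) \<Rightarrow> bool" where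
  "bamdp_traj step c gam s0 dbar pol ss ds as \<longleftrightarrow>
     ss 0 = s0 \<and> ds 0 = dbar \<and>
     (\<forall>t. pmf (pol (ss t, ds t)) (as t) > 0 \<and>
          ss (Suc t) = step (ss t) (as t) \<and>
          ds (Suc t) = (ds t - c (ss t) (as t)) / gam)"

definition in_Pi_P ::
  "('s \<Rightarrow> 'a \<Rightarrow> 's) \<Rightarrow> ('s \<Rightarrow> 'a \<Rightarrow> real) \<Rightarrow> real \<Rightarrow> 's \<Rightarrow> real \<Rightarrow>
   ('s \<times> real \<Rightarrow> 'a pmf) \<Rightarrow> bool" where
  "in_Pi_P step c gam s0 dbar pol \<longleftrightarrow>
     (\<forall>ss ds as t a. bamdp_traj step c gam s0 dbar pol ss ds as \<longrightarrow>
        pmf (pol (ss t, ds t)) a > 0 \<longrightarrow> a \<in> A_P step c gam (ss t) (ds t))"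

end

theory Submission
  imports Defs
begin

lemma run_shift: "run step s as (k + n) = run step (run step s as k) (\<lambda>i. as (k + i)) n"
  by (induction n) auto

lemma summ_aux:
  fixes gam cmax :: real and C :: "nat \<Rightarrow> real"
  assumes "0 < gam" "gam < 1" "\<And>t. 0 \<le> C t \<and> C t \<le> cmax"
  shows "summable (\<lambda>t. gam ^ t * C t)"
proof (rule summable_comparison_test[where g="\<lambda>t. cmax * gam ^ t"])
  show "\<exists>N. \<forall>n\<ge>N. norm (gam ^ n * C n) \<le> cmax * gam ^ n"
    using assms by (auto intro!: exI[of _ 0] mult_right_mono simp: abs_mult mult.commute)
  show "summable (\<lambda>t. cmax * gam ^ t)"
    using assms by (intro summable_mult summable_geometric) auto
qed

lemma split_aux:
  fixes gam cmax :: real and C :: "nat \<Rightarrow> real"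
  assumes "0 < gam" "gam < 1" "\<And>t. 0 \<le> C t \<and> C t \<le> cmax"
  shows "(\<Sum>t. gam ^ t * C t) = (\<Sum>k<n. gam ^ k * C k) + gam ^ n * (\<Sum>t. gam ^ t * C (t + n))"
proof -
  have s: "summable (\<lambda>t. gam ^ t * C t)" using summ_aux[OF assms] .
  have s2: "summable (\<lambda>t. gam ^ t * C (t + n))"
    using assms by (intro summ_aux[where cmax=cmax]) auto
  have "(\<Sum>t. gam ^ t * C t) = (\<Sum>t. gam ^ (t + n) * C (t + n)) + (\<Sum>k<n. gam ^ k * C k)"
    using suminf_split_initial_segment[OF s] by simp
  also have "(\<Sum>t. gam ^ (t + n) * C (t + n)) = (\<Sum>t. gam ^ n * (gam ^ t * C (t + n)))"
    by (simp add: power_add mult_ac)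
  also have "\<dots> = gam ^ n * (\<Sum>t. gam ^ t * C (t + n))"
    using suminf_mult[OF s2] by simp
  finally show ?thesis by simp
qed

lemma cost_nonneg:
  assumes "0 < gam" "gam < 1" "\<And>s a. 0 \<le> c s a \<and> c s a \<le> cmax"
  shows "0 \<le> cum_cost gam c ss as"
  unfolding cum_cost_def
  using assms summ_aux[of gam "\<lambda>t. c (ss t) (as t)" cmax]
  by (intro suminf_nonneg) auto

lemma VC_le:
  assumes "0 < gam" "gam < 1" "\<And>s a. 0 \<le> c s a \<and> c s a \<le> cmax"
  shows "VC step c gam s \<le> cum_cost gam c (run step s as) as"
  unfolding VC_def
  by (rule cINF_lower) (auto intro!: bdd_belowI[where m=0] cost_nonneg[OF assms])

lemma VC_nonneg:
  assumes "0 < gam" "gam < 1" "\<And>s a. 0 \<le> c s a \<and> c s a \<le> cmax"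
  shows "0 \<le> VC step c gam s"
  unfolding VC_def
  by (rule cINF_greatest) (auto intro!: cost_nonneg[OF assms])

lemma QC_le:
  assumes "0 < gam" "gam < 1" "\<And>s a. 0 \<le> c s a \<and> c s a \<le> cmax"
  shows "QC step c gam s (as 0) \<le> cum_cost gam c (run step s as) as"
  unfolding QC_def
  by (rule cINF_lower) (auto intro!: bdd_belowI[where m=0] cost_nonneg[OF assms])

lemma QC_ge:
  fixes a :: 'b
  assumes "0 < gam" "gam < 1" "\<And>s a. 0 \<le> c s a \<and> c s a \<le> cmax"
  shows "c s a + gam * VC step c gam (step s a) \<le> QC step c gam s a"
  unfolding QC_def
proof (rule cINF_greatest)
  show "{as. as 0 = a} \<noteq> {}" by (auto intro: exI[of _ "\<lambda>_. a"])
  fix as :: "nat \<Rightarrow> 'b" assume "as \<in> {as. as 0 = a}"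
  hence a: "as 0 = a" by simp
  let ?C = "\<lambda>t. c (run step s as t) (as t)"
  have "cum_cost gam c (run step s as) as = (\<Sum>k<1. gam ^ k * ?C k) + gam ^ 1 * (\<Sum>t. gam ^ t * ?C (t + 1))"
    unfolding cum_cost_def using assms by (intro split_aux[where cmax=cmax]) auto
  also have "(\<Sum>t. gam ^ t * ?C (t + 1)) = cum_cost gam c (run step (step s a) (\<lambda>i. as (1 + i))) (\<lambda>i. as (1 + i))"
    unfolding cum_cost_def using run_shift[of step s as 1] a by (simp add: add.commute)
  finally have "cum_cost gam c (run step s as) as = c s a + gam * cum_cost gam c (run step (step s a) (\<lambda>i. as (1 + i))) (\<lambda>i. as (1 + i))"
    using a by simp
  moreover have "VC step c gam (step s a) \<le> cum_cost gam c (run step (step s a) (\<lambda>i. as (1 + i))) (\<lambda>i. as (1 + i))"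
    by (rule VC_le[OF assms])
  ultimately show "c s a + gam * VC step c gam (step s a) \<le> cum_cost gam c (run step s as) as"
    using assms(1) by (simp add: mult_left_mono)
qed

lemma traj_run:
  assumes "bamdp_traj step c gam s0 dbar pol ss ds as"
  shows "ss n = run step s0 as n"
  using assms unfolding bamdp_traj_def by (induction n) auto

lemma traj_budget:
  assumes "bamdp_traj step c gam s0 dbar pol ss ds as" "0 < gam"
  shows "dbar = (\<Sum>k<n. gam ^ k * c (ss k) (as k)) + gam ^ n * ds n"
proof (induction n)
  case 0 then show ?case using assms unfolding bamdp_traj_def by simp
next
  case (Suc n)
  have "ds (Suc n) = (ds n - c (ss n) (as n)) / gam" using assms unfolding bamdp_traj_def by simp
  hence "gam ^ Suc n * ds (Suc n) = gam ^ n * (ds n - c (ss n) (as n))" using assms(2) by simp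
  then show ?case using Suc by (simp add: algebra_simps)
qed

theorem theorem2:
  fixes step :: "'s \<Rightarrow> 'a \<Rightarrow> 's" and c :: "'s \<Rightarrow> 'a \<Rightarrow> real"
    and gam cmax dbar :: real and s0 :: 's
  assumes "0 < gam" "gam < 1"
    and "\<And>s a. 0 \<le> c s a \<and> c s a \<le> cmax"
    and "VC step c gam s0 \<le> dbar"
  shows
    "(\<forall>pol ss ds as. in_Pi_P step c gam s0 dbar pol \<longrightarrow>
        bamdp_traj step c gam s0 dbar pol ss ds as \<longrightarrow>
        (\<forall>t. (ss t, ds t) \<in> S_P step c gam))
   \<and> (\<forall>(pol :: 's \<times> real \<Rightarrow> 'a) ss ds as.
        bamdp_traj step c gam s0 dbar (\<lambda>x. return_pmf (pol x)) ss ds as \<longrightarrow>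
        cum_cost gam c ss as \<le> dbar \<longrightarrow>
        in_Pi_P step c gam s0 dbar (\<lambda>x. return_pmf (pol x)))
   \<and> (\<forall>pol ss ds as. in_Pi_P step c gam s0 dbar pol \<longrightarrow>
        bamdp_traj step c gam s0 dbar pol ss ds as \<longrightarrow>
        cum_cost gam c ss as \<le> dbar)"
proof -
  note A = assms(1-3)
  have P1: "(ss t, ds t) \<in> S_P step c gam"
    if pi: "in_Pi_P step c gam s0 dbar pol" and tr: "bamdp_traj step c gam s0 dbar pol ss ds as" for pol ss ds as t
  proof (cases t)
    case 0
    have "0 \<le> VC step c gam s0" by (rule VC_nonneg[OF A])
    then show ?thesis using 0 tr assms(4)
      unfolding bamdp_traj_def S_P_def by auto
  next
    case (Suc n)
    have tn: "pmf (pol (ss n, ds n)) (as n) > 0" "ss (Suc n) = step (ss n) (as n)"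
      "ds (Suc n) = (ds n - c (ss n) (as n)) / gam"
      using tr unfolding bamdp_traj_def by auto
    have "QC step c gam (ss n) (as n) \<le> ds n"
      using pi tr tn(1) unfolding in_Pi_P_def A_P_def by blast
    moreover have "c (ss n) (as n) + gam * VC step c gam (step (ss n) (as n)) \<le> QC step c gam (ss n) (as n)"
      by (rule QC_ge[OF A])
    ultimately have "gam * VC step c gam (ss (Suc n)) \<le> ds n - c (ss n) (as n)" using tn by simp
    hence "VC step c gam (ss (Suc n)) \<le> ds (Suc n)" using tn(3) assms(1)
      by (simp add: pos_le_divide_eq mult.commute)
    moreover have "0 \<le> VC step c gam (ss (Suc n))" by (rule VC_nonneg[OF A])
    ultimately show ?thesis using Suc unfolding S_P_def by auto
  qed
  have P3: "cum_cost gam c ss as \<le> dbar"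
    if pi: "in_Pi_P step c gam s0 dbar pol" and tr: "bamdp_traj step c gam s0 dbar pol ss ds as" for pol ss ds as
    unfolding cum_cost_def
  proof (rule suminf_le_const)
    show "summable (\<lambda>t. gam ^ t * c (ss t) (as t))"
      using A by (intro summ_aux[where cmax=cmax]) auto
    fix n
    have "0 \<le> ds n" using P1[OF pi tr, of n] unfolding S_P_def by auto
    hence "0 \<le> gam ^ n * ds n" using assms(1) by simp
    thus "(\<Sum>t<n. gam ^ t * c (ss t) (as t)) \<le> dbar"
      using traj_budget[OF tr assms(1), of n] by linarith
  qed
  have P2: "in_Pi_P step c gam s0 dbar (\<lambda>x. return_pmf (pol x))"
    if tr: "bamdp_traj step c gam s0 dbar (\<lambda>x. return_pmf (pol x)) ss ds as"
      and cc: "cum_cost gam c ss as \<le> dbar" for pol :: "'s \<times> real \<Rightarrow> 'a" and ss ds as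
    unfolding in_Pi_P_def
  proof (intro allI impI)
    fix ss' ds' as' t a
    assume tr': "bamdp_traj step c gam s0 dbar (\<lambda>x. return_pmf (pol x)) ss' ds' as'"
      and pa: "0 < pmf (return_pmf (pol (ss' t, ds' t))) a"
    have asd: "as n = pol (ss n, ds n)" "as' n = pol (ss' n, ds' n)" for n
      using tr tr' unfolding bamdp_traj_def by (auto simp: pmf_return indicator_def split: if_splits)
    have eq: "ss' n = ss n \<and> ds' n = ds n" for n
    proof (induction n)
      case 0 then show ?case using tr tr' unfolding bamdp_traj_def by simp
    next
      case (Suc n)
      then have "as' n = as n" using asd by simp
      then show ?case using Suc tr tr' unfolding bamdp_traj_def by simp
    qed
    have a: "a = as t" using pa asd(1)[of t] eq[of t] by (auto simp: pmf_return indicator_def split: if_splits)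
    let ?C = "\<lambda>k. c (ss k) (as k)"
    have "cum_cost gam c ss as = (\<Sum>k<t. gam ^ k * ?C k) + gam ^ t * (\<Sum>k. gam ^ k * ?C (k + t))"
      unfolding cum_cost_def using A by (intro split_aux[where cmax=cmax]) auto
    moreover have "dbar = (\<Sum>k<t. gam ^ k * ?C k) + gam ^ t * ds t"
      by (rule traj_budget[OF tr assms(1)])
    ultimately have "gam ^ t * (\<Sum>k. gam ^ k * ?C (k + t)) \<le> gam ^ t * ds t" using cc by linarith
    hence le: "(\<Sum>k. gam ^ k * ?C (k + t)) \<le> ds t" using assms(1) by simp
    have "(\<Sum>k. gam ^ k * ?C (k + t)) = cum_cost gam c (run step (ss t) (\<lambda>i. as (t + i))) (\<lambda>i. as (t + i))"
      unfolding cum_cost_def traj_run[OF tr] run_shift[symmetric] by (simp add: add.commute)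
    moreover have "QC step c gam (ss t) (as t) \<le> cum_cost gam c (run step (ss t) (\<lambda>i. as (t + i))) (\<lambda>i. as (t + i))"
      using QC_le[OF A, where as="\<lambda>i. as (t + i)"] by simp
    ultimately have "QC step c gam (ss t) (as t) \<le> ds t" using le by linarith
    thus "a \<in> A_P step c gam (ss' t) (ds' t)" using a eq[of t] unfolding A_P_def by simp
  qed
  show ?thesis using P1 P2 P3 by blast
qed

end
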